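(* Any contraction of a left increasing tree is left increasing: if $(T,\lambda)$ is a left increasing tree with $n$ branchings and $A\subseteq[n]$, then the increasing tree $\tau(\sigma(T,\lambda)|_A)$ is left increasing.
   Context: A (planar rooted) tree is a finite planar rooted tree in which each vertex has one outgoing edge and at least two incoming edges (ordered left to right); $\varepsilon$ is the trivial tree. $\bigvee(T_0,\ldots,T_m)$ ($m\ge1$) joins the roots of $T_0,\ldots,T_m$ to a new vertex with a new root. A vertex with $j+1$ incoming edges carries $j$ branchings (pairs of consecutive incoming edges). Branchings are totally ordered left to right recursively: for $T=\bigvee(T_0,\ldots,T_m)$ with root branchings $b_1,\ldots,b_m$, $b_i\prec b\prec b_{i+1}$ for $b$ in $T_i$; the natural labelling is the order-preserving bijection from $[n]=\{1,\ldots,n\}$ to the branchings. A level function is a surjection $\lambda$ from vertices onto $[k]$ strictly increasing along each leaf-to-root path; an increasing tree is $(T,\lambda)$; a branching has the level of its vertex. $\sigma(T,\lambda)=(P_1,\ldots,P_k)$ where $P_i$ is the set of natural labels of branchings at level $i$; $\sigma$ is a bijection from increasing trees with $n$ branchings to set compositions of $[n]$ (tuples of pairwise disjoint non-empty sets with union $[n]$), with inverse $\tau$. For a set composition $P=(P_1,\ldots,P_k)$ of $[n]$ and $A\subseteq[n]$, $P|_A$ is obtained from $(P_1\cap A,\ldots,P_k\cap A)$ by deleting empty entries and relabelling $A$ to $[|A|]$ by the order-preserving bijection. $\mathsf{Inc}$: $\mathsf{Inc}(\varepsilon)=\varepsilon$; if $T=\bigvee(T_0,\ldots,T_m)$ and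 $\mathsf{Inc}(T_i)=(T_i,\lambda_i)$ with $k_i$ levels, then $\mathsf{Inc}(T)=(T,\lambda)$ with $\lambda(v)=k_0+\cdots+k_{i-1}+\lambda_i(v)$ for $v$ in $T_i$ and root vertex level $k_0+\cdots+k_m+1$. An increasing tree is left increasing if it lies in the image of $\mathsf{Inc}$. *)

theory Defs
  imports Main
begin

text \<open>Planar rooted trees. Leaf is the trivial tree (a bare edge, no vertex);
  Node ts is the tree obtained by joining the roots of ts (left to right) to a new vertex.\<close>
datatype ptree = Leaf | Node "ptree list"

datatype ltree = LLeaf | LNode nat "ltree list"

fun wf_pt :: "ptree \<Rightarrow> bool" where
  "wf_pt Leaf = True"
| "wf_pt (Node ts) = (2 \<le> length ts \<and> (\<forall>t\<in>set ts. wf_pt t))"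

fun shape :: "ltree \<Rightarrow> ptree" where
  "shape LLeaf = Leaf"
| "shape (LNode l ts) = Node (map shape ts)"

fun levels :: "ltree \<Rightarrow> nat set" where
  "levels LLeaf = {}"
| "levels (LNode l ts) = insert l (\<Union>t\<in>set ts. levels t)"

fun incr :: "ltree \<Rightarrow> bool" where
  "incr LLeaf = True"
| "incr (LNode l ts) = (\<forall>t\<in>set ts. incr t \<and> (\<forall>l'\<in>levels t. l' < l))"

definition is_increasing :: "ltree \<Rightarrow> bool" where
  "is_increasing t \<longleftrightarrow> wf_pt (shape t) \<and> incr t \<and> (\<exists>k. levels t = {1..k})"

definition nlevels :: "ltree \<Rightarrow> nat" where
  "nlevels t = card (levels t)"

text \<open>Levels of the branchings listed in their natural (left-to-right) order:
  for a vertex with subtrees T0..Tm the order is T0, b1, T1, ..., bm, Tm.\<close>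
fun bw :: "ltree \<Rightarrow> nat list" where
  "bw LLeaf = []"
| "bw (LNode l []) = []"
| "bw (LNode l (t # ts)) = bw t @ concat (map (\<lambda>s. l # bw s) ts)"

definition nbranch :: "ltree \<Rightarrow> nat" where
  "nbranch t = length (bw t)"

definition set_composition :: "nat \<Rightarrow> nat set list \<Rightarrow> bool" where
  "set_composition n P \<longleftrightarrow> (\<forall>S\<in>set P. S \<noteq> {}) \<and>
     (\<forall>i<length P. \<forall>j<length P. i \<noteq> j \<longrightarrow> P ! i \<inter> P ! j = {}) \<and>
     \<Union>(set P) = {1..n}"

text \<open>sigma: P_i = natural labels (1-based) of the branchings at level i.\<close>
definition sigma :: "ltree \<Rightarrow> nat set list" where
  "sigma t = map (\<lambda>i. {j \<in> {1..nbranch t}. bw t ! (j - 1) = i}) [1..<nlevels t + 1]"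

definition tau :: "nat set list \<Rightarrow> ltree" where
  "tau P = (THE t. is_increasing t \<and> sigma t = P)"

definition restr :: "nat set list \<Rightarrow> nat set \<Rightarrow> nat set list" where
  "restr P A = map (\<lambda>S. (\<lambda>x. card {a \<in> A. a \<le> x}) ` S)
                  (filter (\<lambda>S. S \<noteq> {}) (map (\<lambda>S. S \<inter> A) P))"

fun shift :: "nat \<Rightarrow> ltree \<Rightarrow> ltree" where
  "shift c LLeaf = LLeaf"
| "shift c (LNode l ts) = LNode (c + l) (map (shift c) ts)"

text \<open>The map Inc. incs c ts processes children left to right, with c the number of levels
  already used by the previous children.\<close>
fun inc :: "ptree \<Rightarrow> ltree" and incs :: "nat \<Rightarrow> ptree list \<Rightarrow> ltree list" where
  "inc Leaf = LLeaf"
| "inc (Node ts) = LNode (sum_list (map (\<lambda>t. nlevels (inc t)) ts) + 1) (incs 0 ts)"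
| "incs c [] = []"
| "incs c (t # ts) = shift c (inc t) # incs (c + nlevels (inc t)) ts"

definition left_increasing :: "ltree \<Rightarrow> bool" where
  "left_increasing t \<longleftrightarrow> is_increasing t \<and> (\<exists>T. wf_pt T \<and> inc T = t)"

end

theory Submission
  imports Defs
begin


fun nv :: "ptree \<Rightarrow> nat" where
  "nv Leaf = 0"
| "nv (Node ts) = sum_list (map nv ts) + 1"

lemma shift_shift[simp]: "shift a (shift b t) = shift (a + b) t"
  by (induction t) (auto simp: add.assoc)

lemma shift_0[simp]: "shift 0 t = t"
  by (induction t) (auto simp: map_idI)

lemma map_shift_incs: "map (shift a) (incs c ts) = incs (a + c) ts"
  by (induction ts arbitrary: c) (auto simp: add.assoc)

lemma bw_shift: "bw (shift c t) = map ((+) c) (bw t)"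
  by (induction t rule: bw.induct) (simp_all add: map_concat o_def cong: map_cong)

lemma levels_shift: "levels (shift c t) = (+) c ` levels t"
  by (induction t) auto

lemma incr_shift: "incr (shift c t) = incr t"
  by (induction t) (auto simp: levels_shift)

lemma shape_shift: "shape (shift c t) = shape t"
  by (induction t) auto

lemma levels_inc:
  "levels (inc T) = {1..nv T}"
  "(\<Union>t\<in>set (incs c ts). levels t) = {c+1..c + sum_list (map nv ts)}"
proof (induction T and c ts rule: inc_incs.induct)
  case 1
  then show ?case by simp
next
  case (2 ts)
  have e: "sum_list (map (\<lambda>t. nlevels (inc t)) ts) = sum_list (map nv ts)"
    using 2 by (auto simp: nlevels_def intro!: arg_cong[where f=sum_list] map_cong)
  have "levels (inc (Node ts)) = insert (sum_list (map nv ts) + 1) {1..sum_list (map nv ts)}"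
    using 2(2) by (simp add: e)
  also have "\<dots> = {1..nv (Node ts)}" by auto
  finally show ?case .
next
  case (3 c)
  then show ?case by simp
next
  case (4 c t ts)
  have n: "nlevels (inc t) = nv t" using 4 by (simp add: nlevels_def)
  have "levels (shift c (inc t)) = {c+1..c+nv t}"
    using 4 by (simp add: levels_shift)
  then show ?case using 4 n by auto
qed

lemma nlevels_inc[simp]: "nlevels (inc T) = nv T"
  by (simp add: nlevels_def levels_inc)

lemma length_incs[simp]: "length (incs c ts) = length ts"
  by (induction ts arbitrary: c) auto

lemma shape_inc:
  "shape (inc T) = T"
  "map shape (incs c ts) = ts"
  by (induction T and c ts rule: inc_incs.induct) (auto simp: shape_shift)

lemma incr_inc:
  "incr (inc T)"
  "\<forall>t\<in>set (incs c ts). incr t"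
proof (induction T and c ts rule: inc_incs.induct)
  case 1
  then show ?case by simp
next
  case (2 ts)
  have "\<forall>t\<in>set (incs 0 ts). \<forall>l\<in>levels t. l < sum_list (map nv ts) + 1"
  proof (intro ballI)
    fix t l assume "t \<in> set (incs 0 ts)" "l \<in> levels t"
    then have "l \<in> {0+1..0 + sum_list (map nv ts)}" using levels_inc(2)[of 0 ts] by blast
    then show "l < sum_list (map nv ts) + 1" by simp
  qed
  then show ?case using 2 by simp
next
  case (3 c)
  then show ?case by simp
next
  case (4 c t ts)
  then show ?case by (simp add: incr_shift)
qed

lemma shift_inc_Node: "shift c (inc (Node ts)) = LNode (c + sum_list (map nv ts) + 1) (incs c ts)"
  by (simp add: map_shift_incs add.assoc)

lemma inc_is_increasing: "wf_pt T \<Longrightarrow> is_increasing (inc T)"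
  unfolding is_increasing_def using shape_inc(1) incr_inc(1) levels_inc(1) by auto

lemma bw_cons2: "bw (LNode l (t # s # ts)) = bw t @ l # bw (LNode l (s # ts))"
  by simp

lemma bw_single: "bw (LNode l [t]) = bw t"
  by simp

lemma bw_cons: "bw (LNode l (t # r)) = bw t @ (if r = [] then [] else l # bw (LNode l r))"
  by (cases r) auto

lemma set_bw_levels: "set (bw t) \<subseteq> levels t"
  by (induction t rule: bw.induct) auto

lemma levels_set_bw: "wf_pt (shape t) \<Longrightarrow> levels t = set (bw t)"
proof (induction t rule: bw.induct)
  case (3 l t ts)
  then show ?case by (cases ts) auto
qed auto



definition bad :: "nat \<Rightarrow> nat \<Rightarrow> nat \<Rightarrow> bool" where
  "bad a b c \<longleftrightarrow> (a = c \<and> a < b) \<or> (c < a \<and> a < b)"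

definition av :: "nat list \<Rightarrow> bool" where
  "av w \<longleftrightarrow> (\<forall>p q r. p < q \<longrightarrow> q < r \<longrightarrow> r < length w \<longrightarrow> \<not> bad (w!p) (w!q) (w!r))"

lemma av_Nil[simp]: "av []"
  by (simp add: av_def)

lemma av_map_mono:
  assumes "\<And>x y. x \<in> set w \<Longrightarrow> y \<in> set w \<Longrightarrow> x < y \<Longrightarrow> f x < f y"
  shows "av (map f w) = av w"
proof -
  have iff: "(f x < f y \<longleftrightarrow> x < y) \<and> (f x = f y \<longleftrightarrow> x = y)" if "x \<in> set w" "y \<in> set w" for x y
    using assms[OF that] assms[OF that(2,1)] by (cases x y rule: linorder_cases) auto
  have "bad (f (w!p)) (f (w!q)) (f (w!r)) = bad (w!p) (w!q) (w!r)"
    if "p < length w" "q < length w" "r < length w" for p q r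
    using that iff[of "w!p" "w!q"] iff[of "w!r" "w!p"] iff[of "w!p" "w!r"] by (auto simp: bad_def)
  then show ?thesis unfolding av_def by auto
qed

lemma av_shift: "av (map ((+) c) w) = av w"
  by (rule av_map_mono) auto

lemma av_appendD:
  assumes "av (x @ y)" shows "av x" "av y"
proof -
  show "av x" unfolding av_def
  proof (intro allI impI)
    fix p q r assume h: "p < q" "q < r" "r < length x"
    have "\<not> bad ((x@y)!p) ((x@y)!q) ((x@y)!r)"
      using assms h unfolding av_def by auto
    then show "\<not> bad (x ! p) (x ! q) (x ! r)" using h by (simp add: nth_append)
  qed
  show "av y" unfolding av_def
  proof (intro allI impI)
    fix p q r assume h: "p < q" "q < r" "r < length y"
    have "\<not> bad ((x@y)!(length x + p)) ((x@y)!(length x + q)) ((x@y)!(length x + r))"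
    proof -
      have all: "\<forall>p q r. p < q \<longrightarrow> q < r \<longrightarrow> r < length (x@y) \<longrightarrow> \<not> bad ((x@y)!p) ((x@y)!q) ((x@y)!r)"
        using assms unfolding av_def .
      show ?thesis using all[rule_format, of "length x + p" "length x + q" "length x + r"] h by simp
    qed
    then show "\<not> bad (y ! p) (y ! q) (y ! r)" by (simp add: nth_append)
  qed
qed

lemma nth_mid: "i > length x \<Longrightarrow> (x @ k # y)!i = y!(i - Suc (length x))"
  by (simp add: nth_append nth_Cons')

lemma nth_mid0: "(x @ k # y)!(length x) = k"
  by (simp add: nth_append)

lemma nth_left: "i < length x \<Longrightarrow> (x @ k # y)!i = x!i"
  by (simp add: nth_append)

lemma av_append_k:
  assumes "av x" "av y" "\<forall>a\<in>set x. a < k" "\<forall>b\<in>set y. b \<le> k"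
    "\<forall>a\<in>set x. \<forall>b\<in>set y. b \<noteq> k \<longrightarrow> a < b"
  shows "av (x @ k # y)"
  unfolding av_def
proof (intro allI impI)
  fix p q r assume h: "p < q" "q < r" "r < length (x @ k # y)"
  let ?w = "x @ k # y"
  let ?n = "length x"
  have ly: "r - Suc ?n < length y" if "r > ?n" using h that by simp
  have midv: "?w!i \<in> set y" if "i > ?n" "i \<le> r" for i
    using nth_mid[OF that(1), of k y] h that by simp
  show "\<not> bad (?w!p) (?w!q) (?w!r)"
  proof (cases "r < ?n")
    case True
    then show ?thesis using assms(1) h unfolding av_def by (simp add: nth_left)
  next
    case rn: False
    show ?thesis
    proof (cases "p > ?n")
      case True
      have all: "\<forall>p q r. p < q \<longrightarrow> q < r \<longrightarrow> r < length y \<longrightarrow> \<not> bad (y!p) (y!q) (y!r)"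
        using assms(2) unfolding av_def .
      have "\<not> bad (y!(p - Suc ?n)) (y!(q - Suc ?n)) (y!(r - Suc ?n))"
        using all[rule_format, of "p - Suc ?n" "q - Suc ?n" "r - Suc ?n"] h True by simp
      then show ?thesis using True h by (simp add: nth_mid)
    next
      case False
      show ?thesis
      proof (cases "p = ?n")
        case True
        have "?w!q \<in> set y" using midv h True by simp
        then have "?w!q \<le> k" using assms(4) by blast
        then show ?thesis using True by (auto simp: bad_def nth_mid0)
      next
        case False
        then have pn: "p < ?n" using \<open>\<not> p > ?n\<close> by simp
        have a: "?w!p \<in> set x" "?w!p < k" using pn assms(3) by (auto simp: nth_left)
        show ?thesis
        proof (cases "r = ?n")
          case True
          then show ?thesis using a by (auto simp: bad_def nth_mid0)
        next
          case False
          then have "r > ?n" using rn by simp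
          then have c: "?w!r \<in> set y" using midv by simp
          show ?thesis
          proof (cases "?w!r = k")
            case True then show ?thesis using a by (auto simp: bad_def)
          next
            case False
            then have "?w!p < ?w!r" using a c assms(5) by blast
            then show ?thesis by (auto simp: bad_def)
          qed
        qed
      qed
    qed
  qed
qed

lemma av_children:
  assumes "\<forall>t\<in>set ts. av (bw (inc t))" "c + sum_list (map nv ts) < L"
  shows "av (bw (LNode L (incs c ts)))"
  using assms
proof (induction ts arbitrary: c rule: induct_list012)
  case 1
  then show ?case by simp
next
  case (2 t)
  then show ?case by (simp add: bw_shift av_shift)
next
  case (3 t s r)
  let ?x = "bw (shift c (inc t))"
  let ?y = "bw (LNode L (incs (c + nv t) (s # r)))"
  have eq: "bw (LNode L (incs c (t # s # r))) = ?x @ L # ?y"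
    by simp
  have sx: "set ?x \<subseteq> {c+1..c+nv t}"
    using set_bw_levels[of "shift c (inc t)"] by (simp add: levels_shift levels_inc add.commute)
  have "set ?y \<subseteq> insert L {c + nv t + 1..c + nv t + sum_list (map nv (s # r))}"
    using set_bw_levels[of "LNode L (incs (c + nv t) (s # r))"] levels_inc(2)[of "c + nv t" "s # r"]
    by simp
  then have sy: "set ?y \<subseteq> insert L {c + nv t + 1..c + nv t + sum_list (map nv (s # r))}" .
  have "av ?x" using 3 by (simp add: bw_shift av_shift)
  moreover have "av ?y" using 3 by (intro "3.IH"(2)) auto
  moreover have "\<forall>a\<in>set ?x. a < L" using sx 3 by fastforce
  moreover have "\<forall>b\<in>set ?y. b \<le> L" using sy 3 by fastforce
  moreover have "\<forall>a\<in>set ?x. \<forall>b\<in>set ?y. b \<noteq> L \<longrightarrow> a < b" using sx sy by fastforce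
  ultimately show ?case using eq av_append_k by metis
qed

lemma av_inc: "wf_pt T \<Longrightarrow> av (bw (inc T))"
proof (induction T)
  case Leaf
  then show ?case by simp
next
  case (Node ts)
  have "inc (Node ts) = LNode (sum_list (map nv ts) + 1) (incs 0 ts)"
    by (simp cong: map_cong)
  moreover have "av (bw (LNode (sum_list (map nv ts) + 1) (incs 0 ts)))"
    using Node by (intro av_children) auto
  ultimately show ?case by simp
qed



lemma interval_split:
  fixes A B :: "nat set"
  assumes "A \<union> B = {c+1..c+n}" "\<forall>x\<in>A. \<forall>y\<in>B. x < y"
  shows "A = {c+1..c+card A} \<and> B = {c+card A+1..c+n} \<and> card A \<le> n"
proof (cases "A = {}")
  case True
  then show ?thesis using assms by simp
next
  case False
  have fin: "finite A" using assms(1) by (metis finite_Un finite_atLeastAtMost)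
  define M where "M = Max A"
  have MA: "M \<in> A" using fin False by (simp add: M_def)
  have Ale: "\<forall>x\<in>A. x \<le> M" using fin by (simp add: M_def)
  have A1: "A = {c+1..M}"
  proof
    show "A \<subseteq> {c+1..M}" using Ale assms(1) by auto
    show "{c+1..M} \<subseteq> A"
    proof
      fix z assume z: "z \<in> {c+1..M}"
      have "M \<le> c + n" using MA assms(1) by auto
      then have "z \<in> A \<union> B" using z assms(1) by auto
      moreover have "z \<notin> B" using z MA assms(2) by fastforce
      ultimately show "z \<in> A" by blast
    qed
  qed
  have cM: "c + 1 \<le> M" using MA assms(1) by auto
  have cardA: "card A = M - c" using A1 by simp
  have Mcn: "M \<le> c + n" using MA assms(1) by auto
  have B1: "B = {M+1..c+n}"
  proof
    show "B \<subseteq> {M+1..c+n}" using assms MA by fastforce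
    show "{M+1..c+n} \<subseteq> B"
    proof
      fix x assume x: "x \<in> {M+1..c+n}"
      then have "x \<in> A \<union> B" using assms(1) cM by auto
      moreover have "x \<notin> A" using x Ale by fastforce
      ultimately show "x \<in> B" by blast
    qed
  qed
  show ?thesis using A1 B1 cardA cM Mcn by simp
qed

lemma construct:
  "\<forall>w c n. length w = m \<longrightarrow> av w \<longrightarrow>
     (set w = {c+1..c+n} \<longrightarrow> (\<exists>T. wf_pt T \<and> nv T = n \<and> bw (shift c (inc T)) = w)) \<and>
     (set w - {c+n+1} = {c+1..c+n} \<longrightarrow> (\<forall>x\<in>set w. x \<le> c+n+1) \<longrightarrow>
        (\<exists>ts. ts \<noteq> [] \<and> (\<forall>t\<in>set ts. wf_pt t) \<and> sum_list (map nv ts) = n \<and>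
              (c+n+1 \<in> set w \<longrightarrow> 2 \<le> length ts) \<and>
              bw (LNode (c+n+1) (incs c ts)) = w))"
proof (induction m rule: less_induct)
  case (less m)
  have Hin: "\<exists>ts. ts \<noteq> [] \<and> (\<forall>t\<in>set ts. wf_pt t) \<and> sum_list (map nv ts) = n \<and>
              2 \<le> length ts \<and> bw (LNode (c+n+1) (incs c ts)) = w"
    if w: "length w = m" "av w" "set w - {c+n+1} = {c+1..c+n}" "\<forall>x\<in>set w. x \<le> c+n+1"
      "c+n+1 \<in> set w" for w c n
  proof -
    let ?k = "c+n+1"
    obtain u0 rest where sp: "w = u0 @ ?k # rest" "?k \<notin> set u0"
      using split_list_first[OF w(5)] by blast
    have av0: "av u0" using w(2) sp(1) av_appendD by metis
    have avr: "av rest" using w(2) sp(1) av_appendD(2)[of "u0 @ [?k]" rest] by simp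
    have lt: "\<forall>a\<in>set u0. \<forall>b\<in>set rest. b \<noteq> ?k \<longrightarrow> a < b"
    proof (intro ballI impI)
      fix a b assume ab: "a \<in> set u0" "b \<in> set rest" "b \<noteq> ?k"
      obtain i where i: "i < length u0" "u0!i = a" using ab(1) by (meson in_set_conv_nth)
      obtain j where j: "j < length rest" "rest!j = b" using ab(2) by (meson in_set_conv_nth)
      have all: "\<forall>p q r. p < q \<longrightarrow> q < r \<longrightarrow> r < length w \<longrightarrow> \<not> bad (w!p) (w!q) (w!r)"
        using w(2) unfolding av_def .
      have "\<not> bad (w!i) (w!(length u0)) (w!(Suc (length u0) + j))"
        using all[rule_format, of i "length u0" "Suc (length u0) + j"] i j sp(1) by simp
      moreover have "w!i = a" using i sp(1) by (simp add: nth_append)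
      moreover have "w!(length u0) = ?k" using sp(1) by (simp add: nth_append)
      moreover have "w!(Suc (length u0) + j) = b" using j sp(1) by (simp add: nth_append)
      moreover have "a < ?k" using ab(1) sp w(4) by (metis Un_iff le_neq_implies_less set_append)
      ultimately show "a < b" by (auto simp: bad_def)
    qed
    have un: "set u0 \<union> (set rest - {?k}) = {c+1..c+n}"
      using w(3) sp by auto
    obtain n0 where n0: "set u0 = {c+1..c+n0}" "set rest - {?k} = {c+n0+1..c+n}" "n0 \<le> n"
      using interval_split[OF un] lt by blast
    have l0: "length u0 < m" and lr: "length rest < m" using w(1) sp(1) by simp_all
    obtain T0 where T0: "wf_pt T0" "nv T0 = n0" "bw (shift c (inc T0)) = u0"
      using less[OF l0] av0 n0(1) by blast
    have r1: "set rest - {(c+n0)+(n-n0)+1} = {(c+n0)+1..(c+n0)+(n-n0)}" using n0 by simp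
    have r2: "\<forall>x\<in>set rest. x \<le> (c+n0)+(n-n0)+1" using w(4) sp(1) n0(3) by simp
    obtain ts where ts: "ts \<noteq> []" "\<forall>t\<in>set ts. wf_pt t" "sum_list (map nv ts) = n - n0"
        "bw (LNode ((c+n0)+(n-n0)+1) (incs (c+n0) ts)) = rest"
      using less[OF lr] avr r1 r2 by blast
    have kk: "(c+n0)+(n-n0)+1 = ?k" using n0(3) by simp
    obtain s r where sr: "ts = s # r" using ts(1) by (cases ts) auto
    have "bw (LNode ?k (incs c (T0 # ts))) = u0 @ ?k # rest"
      using T0 ts(4) kk sr by simp
    then show ?thesis using T0 ts sp n0(3) sr by (intro exI[of _ "T0 # ts"]) auto
  qed
  have G: "\<exists>T. wf_pt T \<and> nv T = n \<and> bw (shift c (inc T)) = w"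
    if w: "length w = m" "av w" "set w = {c+1..c+n}" for w c n
  proof (cases "w = []")
    case True
    then have "n = 0" using w(3) by simp
    then show ?thesis using True by (intro exI[of _ Leaf]) simp
  next
    case False
    then have n1: "n \<ge> 1" using w(3) by (cases n) auto
    have "c + (n-1) + 1 \<in> set w" using w(3) n1 by simp
    moreover have "set w - {c+(n-1)+1} = {c+1..c+(n-1)}" using w(3) n1 by auto
    moreover have "\<forall>x\<in>set w. x \<le> c+(n-1)+1" using w(3) n1 by simp
    ultimately obtain ts where ts: "ts \<noteq> []" "\<forall>t\<in>set ts. wf_pt t" "sum_list (map nv ts) = n - 1"
        "2 \<le> length ts" "bw (LNode (c+(n-1)+1) (incs c ts)) = w"
      using Hin[OF w(1,2)] by blast
    have "bw (shift c (inc (Node ts))) = w"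
      using ts(3,5) n1 by (simp only: shift_inc_Node)
    moreover have "wf_pt (Node ts)" using ts by simp
    moreover have "nv (Node ts) = n" using ts(3) n1 by simp
    ultimately show ?thesis by blast
  qed
  show ?case
  proof (intro allI impI conjI)
    fix w c n assume w: "length w = m" "av w"
    show "set w = {c+1..c+n} \<Longrightarrow> \<exists>T. wf_pt T \<and> nv T = n \<and> bw (shift c (inc T)) = w"
      using G w by blast
    assume h: "set w - {c+n+1} = {c+1..c+n}" "\<forall>x\<in>set w. x \<le> c+n+1"
    show "\<exists>ts. ts \<noteq> [] \<and> (\<forall>t\<in>set ts. wf_pt t) \<and> sum_list (map nv ts) = n \<and>
              (c+n+1 \<in> set w \<longrightarrow> 2 \<le> length ts) \<and>
              bw (LNode (c+n+1) (incs c ts)) = w"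
    proof (cases "c+n+1 \<in> set w")
      case True
      then show ?thesis using Hin[OF w h] by blast
    next
      case False
      then have "set w = {c+1..c+n}" using h(1) by auto
      then obtain T where T: "wf_pt T" "nv T = n" "bw (shift c (inc T)) = w" using G w by blast
      then show ?thesis using False by (intro exI[of _ "[T]"]) simp
    qed
  qed
qed



lemma bw_split:
  assumes "l \<notin> set x" "l \<notin> set x'" "x @ y = x' @ y'" "y = [] \<or> hd y = l" "y' = [] \<or> hd y' = l"
  shows "x = x' \<and> y = y'"
proof -
  have tw: "takeWhile (\<lambda>z. z \<noteq> l) y = []" using assms(4) by (cases y) auto
  have tw': "takeWhile (\<lambda>z. z \<noteq> l) y' = []" using assms(5) by (cases y') auto
  have "takeWhile (\<lambda>z. z \<noteq> l) (x @ y) = x" using assms(1) tw by (subst takeWhile_append2) auto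
  moreover have "takeWhile (\<lambda>z. z \<noteq> l) (x' @ y') = x'" using assms(2) tw' by (subst takeWhile_append2) auto
  ultimately have "x = x'" using assms(3) by simp
  then show ?thesis using assms(3) by simp
qed

definition good :: "ltree \<Rightarrow> bool" where
  "good t \<longleftrightarrow> wf_pt (shape t) \<and> incr t"

lemma children_eq:
  assumes "\<forall>s\<in>set ts. \<forall>s'. good s \<longrightarrow> good s' \<longrightarrow> bw s = bw s' \<longrightarrow> s = s'"
    "\<forall>s\<in>set ts. good s \<and> l \<notin> set (bw s)" "\<forall>s\<in>set ts'. good s \<and> l \<notin> set (bw s)"
    "ts \<noteq> []" "ts' \<noteq> []" "bw (LNode l ts) = bw (LNode l ts')"
  shows "ts = ts'"
  using assms
proof (induction ts arbitrary: ts')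
  case Nil
  then show ?case by simp
next
  case (Cons s r)
  obtain s' r' where ts': "ts' = s' # r'" using Cons.prems(5) by (cases ts') auto
  let ?y = "(if r = [] then [] else l # bw (LNode l r))"
  let ?y' = "(if r' = [] then [] else l # bw (LNode l r'))"
  have e: "bw s @ ?y = bw s' @ ?y'"
    using Cons.prems(6) ts' by (simp only: bw_cons)
  have n1: "l \<notin> set (bw s)" using Cons.prems(2) by simp
  have n2: "l \<notin> set (bw s')" using Cons.prems(3) ts' by simp
  have h1: "?y = [] \<or> hd ?y = l" by simp
  have h2: "?y' = [] \<or> hd ?y' = l" by simp
  have sp: "bw s = bw s' \<and> ?y = ?y'"
    by (rule bw_split[OF n1 n2 e h1 h2])
  have g1: "good s" using Cons.prems(2) by simp
  have g2: "good s'" using Cons.prems(3) ts' by simp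
  have ss: "s = s'" using Cons.prems(1) g1 g2 sp by simp
  show ?case
  proof (cases "r = []")
    case True
    then have "r' = []" using sp by (cases "r' = []") simp_all
    then show ?thesis using True ss ts' by simp
  next
    case False
    then have r': "r' \<noteq> []" using sp by (cases "r' = []") simp_all
    then have eq: "bw (LNode l r) = bw (LNode l r')" using sp False by simp
    have p1: "\<forall>s\<in>set r. \<forall>s'. good s \<longrightarrow> good s' \<longrightarrow> bw s = bw s' \<longrightarrow> s = s'"
      using Cons.prems(1) by simp
    have p2: "\<forall>s\<in>set r. good s \<and> l \<notin> set (bw s)" using Cons.prems(2) by simp
    have p3: "\<forall>s\<in>set r'. good s \<and> l \<notin> set (bw s)" using Cons.prems(3) ts' by simp
    have "r = r'" using Cons.IH[OF p1 p2 p3 False r' eq] .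
    then show ?thesis using ss ts' by simp
  qed
qed

lemma incr_le:
  assumes "incr (LNode l ts)" "x \<in> levels (LNode l ts)" shows "x \<le> l"
proof -
  from assms(2) have "x = l \<or> (\<exists>t\<in>set ts. x \<in> levels t)" by simp
  then show ?thesis
  proof
    assume "\<exists>t\<in>set ts. x \<in> levels t"
    then obtain t where "t \<in> set ts" "x \<in> levels t" by blast
    then show ?thesis using assms(1) by (meson incr.simps(2) less_imp_le)
  qed simp
qed

lemma incr_child:
  assumes "incr (LNode l ts)" "s \<in> set ts" shows "incr s" "l \<notin> set (bw s)"
proof -
  show "incr s" using assms by simp
  have "\<forall>x\<in>levels s. x < l" using assms by simp
  then show "l \<notin> set (bw s)" using set_bw_levels[of s] by blast
qed

lemma wf_child: "wf_pt (shape (LNode l ts)) \<Longrightarrow> s \<in> set ts \<Longrightarrow> wf_pt (shape s)"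
  by simp

lemma bw_inj: "good t1 \<Longrightarrow> good t2 \<Longrightarrow> bw t1 = bw t2 \<Longrightarrow> t1 = t2"
proof (induction t1 arbitrary: t2)
  case LLeaf
  show ?case
  proof (cases t2)
    case (LNode l ts)
    then have "l \<in> levels t2" by simp
    then have "l \<in> set (bw t2)" using LLeaf(2) levels_set_bw by (auto simp: good_def)
    then show ?thesis using LLeaf(3) by simp
  qed simp
next
  case (LNode l ts)
  show ?case
  proof (cases t2)
    case LLeaf
    have "l \<in> set (bw (LNode l ts))" using LNode(2) levels_set_bw[of "LNode l ts"] by (auto simp: good_def)
    then show ?thesis using LNode(4) LLeaf by simp
  next
    case (LNode l' ts')
    note t2 = this
    have wf1: "wf_pt (shape (LNode l ts))" "incr (LNode l ts)" using LNode.prems(1) by (auto simp: good_def)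
    have wf2: "wf_pt (shape t2)" "incr t2" using LNode.prems(2) by (auto simp: good_def)
    have "l \<in> set (bw t2)" using LNode.prems(3) levels_set_bw[OF wf1(1)] by auto
    then have "l \<in> levels t2" using set_bw_levels by blast
    then have le1: "l \<le> l'" using wf2(2) t2 incr_le by blast
    have "l' \<in> set (bw (LNode l ts))" using LNode.prems(3) levels_set_bw[OF wf2(1)] t2 by auto
    then have "l' \<in> levels (LNode l ts)" using set_bw_levels by blast
    then have le2: "l' \<le> l" using wf1(2) incr_le by blast
    have ll: "l' = l" using le1 le2 by simp
    have c1: "\<forall>s\<in>set ts. good s \<and> l \<notin> set (bw s)"
      using wf1 incr_child wf_child by (simp add: good_def)
    have c2: "\<forall>s\<in>set ts'. good s \<and> l \<notin> set (bw s)"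
      using wf2 incr_child wf_child t2 ll by (simp add: good_def)
    have ne1: "ts \<noteq> []" using wf1 by auto
    have ne2: "ts' \<noteq> []" using wf2 t2 by auto
    have "ts = ts'"
      by (rule children_eq[OF _ c1 c2 ne1 ne2]) (use LNode.IH LNode.prems(3) t2 ll in auto)
    then show ?thesis using t2 ll by simp
  qed
qed



definition compw :: "nat list \<Rightarrow> nat set list" where
  "compw w = map (\<lambda>i. {j \<in> {1..length w}. w ! (j - 1) = i}) [1..<card (set w) + 1]"

lemma sigma_comp: "is_increasing t \<Longrightarrow> sigma t = compw (bw t)"
  unfolding sigma_def compw_def nlevels_def nbranch_def is_increasing_def
  using levels_set_bw by simp

lemma comp_nth:
  assumes "i < card (set w)" shows "compw w ! i = {j \<in> {1..length w}. w ! (j - 1) = Suc i}"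
proof -
  have l: "i < length [1..<card (set w)+1]" using assms by simp
  have e: "[1..<card (set w) + 1] ! i = Suc i" using assms by (simp only: nth_upt)
  show ?thesis unfolding compw_def nth_map[OF l] e ..
qed

lemma length_comp: "length (compw w) = card (set w)"
  by (simp add: compw_def del: upt_Suc upt_rec)

lemma comp_inj:
  assumes "set w1 = {1..k1}" "set w2 = {1..k2}" "compw w1 = compw w2"
  shows "w1 = w2"
proof -
  have c1: "card (set w1) = k1" and c2: "card (set w2) = k2" using assms by simp_all
  have "length (compw w1) = k1" "length (compw w2) = k2" using c1 c2 by (simp_all add: compw_def)
  then have kk: "k1 = k2" using assms(3) by simp
  have F: "{j \<in> {1..length w1}. w1 ! (j - 1) = i} = {j \<in> {1..length w2}. w2 ! (j - 1) = i}"
    if "i \<in> {1..k1}" for i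
  proof -
    have "compw w1 ! (i - 1) = compw w2 ! (i - 1)" using assms(3) by simp
    moreover have "i - 1 < card (set w1)" "i - 1 < card (set w2)" using that c1 c2 kk by auto
    ultimately show ?thesis using that comp_nth[of "i - 1" w1] comp_nth[of "i - 1" w2] by simp
  qed
  have len: "length w1 = length w2"
  proof (rule ccontr)
    assume ne: "length w1 \<noteq> length w2"
    show False
    proof (cases "length w1 < length w2")
      case True
      let ?j = "length w2"
      have "w2 ! (?j - 1) \<in> set w2" using True by (simp add: nth_mem)
      then have i: "w2 ! (?j - 1) \<in> {1..k1}" using assms(2) kk by simp
      have "?j \<in> {j \<in> {1..length w2}. w2 ! (j - 1) = w2 ! (?j - 1)}" using True by simp
      then have "?j \<in> {j \<in> {1..length w1}. w1 ! (j - 1) = w2 ! (?j - 1)}" using F[OF i] by (simp only:)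
      then show False using True by simp
    next
      case False
      then have lt: "length w2 < length w1" using ne by simp
      let ?j = "length w1"
      have "w1 ! (?j - 1) \<in> set w1" using lt by (simp add: nth_mem)
      then have i: "w1 ! (?j - 1) \<in> {1..k1}" using assms(1) by simp
      have "?j \<in> {j \<in> {1..length w1}. w1 ! (j - 1) = w1 ! (?j - 1)}" using lt by simp
      then have "?j \<in> {j \<in> {1..length w2}. w2 ! (j - 1) = w1 ! (?j - 1)}" using F[OF i] by (simp only:)
      then show False using lt by simp
    qed
  qed
  show ?thesis
  proof (rule nth_equalityI[OF len])
    fix j assume j: "j < length w1"
    have "w1 ! j \<in> set w1" using j by (simp add: nth_mem)
    then have i: "w1 ! j \<in> {1..k1}" using assms(1) by simp
    have "Suc j \<in> {j' \<in> {1..length w1}. w1 ! (j' - 1) = w1 ! j}" using j by simp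
    then have "Suc j \<in> {j' \<in> {1..length w2}. w2 ! (j' - 1) = w1 ! j}" using F[OF i] by (simp only:)
    then show "w1 ! j = w2 ! j" by simp
  qed
qed

definition rk :: "nat set \<Rightarrow> nat \<Rightarrow> nat" where
  "rk S x = card {y \<in> S. y \<le> x}"

lemma rk_nth:
  assumes "finite S" "i < card S"
  shows "rk S (sorted_list_of_set S ! i) = Suc i"
proof -
  let ?s = "sorted_list_of_set S"
  have ss: "sorted_wrt (<) ?s" by simp
  have ls: "length ?s = card S" by simp
  have ds: "distinct ?s" by simp
  have st: "set ?s = S" using assms(1) by simp
  have "{y \<in> S. y \<le> ?s ! i} = (!) ?s ` {0..i}"
  proof
    show "{y \<in> S. y \<le> ?s ! i} \<subseteq> (!) ?s ` {0..i}"
    proof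
      fix y assume y: "y \<in> {y \<in> S. y \<le> ?s ! i}"
      then obtain j where j: "j < length ?s" "?s ! j = y" using st by (metis (no_types, lifting) in_set_conv_nth mem_Collect_eq)
      have "j \<le> i"
      proof (rule ccontr)
        assume "\<not> j \<le> i"
        then have "?s ! i < ?s ! j" using sorted_wrt_nth_less[OF ss, of i j] j by simp
        then show False using y j by simp
      qed
      then show "y \<in> (!) ?s ` {0..i}" using j by auto
    qed
    show "(!) ?s ` {0..i} \<subseteq> {y \<in> S. y \<le> ?s ! i}"
    proof
      fix y assume "y \<in> (!) ?s ` {0..i}"
      then obtain j where j: "j \<le> i" "y = ?s ! j" by auto
      have "?s ! j \<le> ?s ! i" using j(1) sorted_wrt_nth_less[OF ss, of j i] assms(2) ls
        by (cases "j = i") auto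
      moreover have "?s ! j \<in> S" using j assms(2) ls st by (metis le_less_trans nth_mem)
      ultimately show "y \<in> {y \<in> S. y \<le> ?s ! i}" using j by simp
    qed
  qed
  moreover have "inj_on ((!) ?s) {0..i}" using ds assms(2) ls by (intro inj_on_nth) auto
  ultimately show ?thesis unfolding rk_def by (simp add: card_image)
qed

lemma rk_mono:
  assumes "finite S" "y \<in> S" "x < y"
  shows "rk S x < rk S y"
proof -
  have sub: "{z \<in> S. z \<le> x} \<subseteq> {z \<in> S. z \<le> y}" using assms by auto
  have "y \<in> {z \<in> S. z \<le> y}" "y \<notin> {z \<in> S. z \<le> x}" using assms by auto
  then have "{z \<in> S. z \<le> x} \<subset> {z \<in> S. z \<le> y}" using sub by blast
  then show ?thesis unfolding rk_def by (intro psubset_card_mono) (use assms in auto)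
qed

lemma rk_image:
  assumes "finite S" shows "rk S ` S = {1..card S}"
proof -
  let ?s = "sorted_list_of_set S"
  have "(!) ?s ` {0..<card S} = set (take (card S) ?s)" by (intro nth_image) simp
  then have eqS: "S = (!) ?s ` {0..<card S}" using assms by simp
  have "rk S ` S = rk S ` ((!) ?s ` {0..<card S})" using eqS by (rule arg_cong)
  also have "\<dots> = (\<lambda>i. rk S (?s ! i)) ` {0..<card S}" by (simp only: image_image)
  also have "\<dots> = Suc ` {0..<card S}" using rk_nth[OF assms] by (intro image_cong) auto
  also have "\<dots> = {1..card S}" by (simp add: image_Suc_atLeastLessThan atLeastLessThanSuc_atLeastAtMost)
  finally show ?thesis .
qed

lemma rk_inj: "finite S \<Longrightarrow> x \<in> S \<Longrightarrow> y \<in> S \<Longrightarrow> rk S x = rk S y \<Longrightarrow> x = y"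
  by (cases x y rule: linorder_cases) (auto dest: rk_mono)

definition sub :: "nat list \<Rightarrow> nat set \<Rightarrow> nat list" where
  "sub w A = map (\<lambda>a. w ! (a - 1)) (sorted_list_of_set A)"

lemma av_sub:
  assumes "av w" "A \<subseteq> {1..length w}"
  shows "av (sub w A)"
  unfolding av_def
proof (intro allI impI)
  fix p q r assume h: "p < q" "q < r" "r < length (sub w A)"
  let ?s = "sorted_list_of_set A"
  have fin: "finite A" using assms(2) finite_subset by blast
  have ss: "sorted_wrt (<) ?s" by simp
  have ls: "length ?s = card A" by simp
  have st: "set ?s = A" using fin by simp
  have lr: "r < length ?s" using h by (simp add: sub_def)
  have pq: "?s ! p < ?s ! q" using sorted_wrt_nth_less[OF ss h(1)] h lr by simp
  have qr: "?s ! q < ?s ! r" using sorted_wrt_nth_less[OF ss h(2) lr] .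
  have inA: "?s ! r \<in> A" using lr st nth_mem by blast
  have inA': "?s ! p \<in> A" using lr h st nth_mem by (metis order.strict_trans)
  have b1: "?s ! p \<ge> 1" "?s ! r \<le> length w" using inA inA' assms(2) by auto
  have all: "\<forall>p q r. p < q \<longrightarrow> q < r \<longrightarrow> r < length w \<longrightarrow> \<not> bad (w!p) (w!q) (w!r)"
    using assms(1) unfolding av_def .
  have "\<not> bad (w!(?s ! p - 1)) (w!(?s ! q - 1)) (w!(?s ! r - 1))"
    using all[rule_format, of "?s ! p - 1" "?s ! q - 1" "?s ! r - 1"] pq qr b1 by simp
  moreover have "p < length ?s" "q < length ?s" using h lr by simp_all
  ultimately show "\<not> bad (sub w A ! p) (sub w A ! q) (sub w A ! r)"
    using lr by (simp add: sub_def)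
qed

lemma restr_comp:
  assumes "set w = {1..k}" "A \<subseteq> {1..length w}"
  shows "restr (compw w) A = compw (map (rk (set (sub w A))) (sub w A))"
proof -
  define sA where "sA = sorted_list_of_set A"
  define V where "V = set (sub w A)"
  define sV where "sV = sorted_list_of_set V"
  define u where "u = map (rk V) (sub w A)"
  define G where "G i = {j \<in> A. w ! (j - 1) = i}" for i
  have finA: "finite A" using assms(2) finite_subset by blast
  have finV: "finite V" by (simp add: V_def)
  have lsA: "length sA = card A" by (simp add: sA_def)
  have setsA: "set sA = A" using finA by (simp add: sA_def)
  have Vdef: "V = (\<lambda>a. w ! (a - 1)) ` A" by (simp add: V_def sub_def finA)
  have Vk: "V \<subseteq> {1..k}"
  proof
    fix x assume "x \<in> V"
    then obtain a where a: "a \<in> A" "x = w ! (a - 1)" using Vdef by blast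
    then have "a - 1 < length w" using assms(2) by force
    then have "x \<in> set w" using a by simp
    then show "x \<in> {1..k}" using assms(1) by simp
  qed
  have ck: "card (set w) = k" using assms(1) by simp
  have m1: "map (\<lambda>S. S \<inter> A) (compw w) = map G [1..<k+1]"
    unfolding compw_def ck map_map
    by (rule map_cong) (use assms(2) in \<open>auto simp: G_def\<close>)
  have GV: "G i \<noteq> {} \<longleftrightarrow> i \<in> V" for i
    unfolding Vdef G_def by auto
  have filt: "filter (\<lambda>S. S \<noteq> {}) (map G [1..<k+1]) = map G (filter (\<lambda>i. i \<in> V) [1..<k+1])"
    by (simp only: filter_map o_def GV)
  have fsV: "filter (\<lambda>i. i \<in> V) [1..<k+1] = sV"
  proof -
    have "sorted_wrt (<) (filter (\<lambda>i. i \<in> V) [1..<k+1])"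
      by (intro sorted_wrt_filter) (simp only: sorted_wrt_upt)
    moreover have "sorted_wrt (<) sV" by (simp add: sV_def)
    moreover have "set sV = set (filter (\<lambda>i. i \<in> V) [1..<k+1])"
      using Vk finV by (auto simp: sV_def)
    ultimately show ?thesis by (metis strict_sorted_equal)
  qed
  have LHS: "restr (compw w) A = map (\<lambda>i. rk A ` G i) sV"
    unfolding restr_def m1 filt fsV by (simp add: rk_def[abs_def])
  have lu: "length u = card A" by (simp add: u_def sub_def)
  have su: "set u = {1..card V}" unfolding u_def using rk_image[OF finV] by (simp add: V_def)
  have csu: "card (set u) = card V" using su by simp
  have lsV: "length sV = card V" by (simp add: sV_def)
  have setsV: "set sV = V" using finV by (simp add: sV_def)
  have unth: "u ! i = rk V (w ! (sA ! i - 1))" if "i < card A" for i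
    using that lsA by (simp add: u_def sub_def sA_def)
  have len1: "length (map (\<lambda>i. rk A ` G i) sV) = card V" using lsV by simp
  have len2: "length (compw u) = card V" by (simp only: length_comp csu)
  have elt: "map (\<lambda>i. rk A ` G i) sV ! r = compw u ! r" if r: "r < card V" for r
  proof -
    have "r < card (set u)" using r csu by simp
    then have cr: "compw u ! r = {j \<in> {1..card A}. u ! (j - 1) = Suc r}"
      using comp_nth[of r u] lu by simp
    have rkr: "rk V (sV ! r) = Suc r" using rk_nth[OF finV r] unfolding sV_def .
    have "r < length sV" using r lsV by simp
    then have "sV ! r \<in> set sV" by (rule nth_mem)
    then have sVr: "sV ! r \<in> V" using setsV by simp
    have "rk A ` G (sV ! r) = {j \<in> {1..card A}. u ! (j - 1) = Suc r}"
    proof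
      show "rk A ` G (sV ! r) \<subseteq> {j \<in> {1..card A}. u ! (j - 1) = Suc r}"
      proof
        fix x assume "x \<in> rk A ` G (sV ! r)"
        then obtain a where a: "a \<in> A" "w ! (a - 1) = sV ! r" "x = rk A a" unfolding G_def by blast
        have "a \<in> set sA" using a(1) setsA by simp
        then obtain i where i0: "i < length sA" "sA ! i = a" unfolding in_set_conv_nth by blast
        have i: "i < card A" using i0 lsA by simp
        have "rk A (sA ! i) = Suc i" using rk_nth[OF finA i] unfolding sA_def .
        then have x: "x = Suc i" using a(3) i0(2) by simp
        have "u ! i = rk V (w ! (a - 1))" using unth[OF i] i0(2) by simp
        then have "u ! i = Suc r" using a(2) rkr by simp
        then show "x \<in> {j \<in> {1..card A}. u ! (j - 1) = Suc r}" using x i by simp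
      qed
      show "{j \<in> {1..card A}. u ! (j - 1) = Suc r} \<subseteq> rk A ` G (sV ! r)"
      proof
        fix j assume j: "j \<in> {j \<in> {1..card A}. u ! (j - 1) = Suc r}"
        define i where "i = j - 1"
        have i: "i < card A" "j = Suc i" using j unfolding i_def by auto
        define a where "a = sA ! i"
        have "i < length sA" using i(1) lsA by simp
        then have "sA ! i \<in> set sA" by (rule nth_mem)
        then have aA: "a \<in> A" using setsA a_def by simp
        have "u ! i = Suc r" using j unfolding i_def by simp
        then have e1: "rk V (w ! (a - 1)) = Suc r" using unth[OF i(1)] unfolding a_def by simp
        have inV: "w ! (a - 1) \<in> V" using aA Vdef by blast
        have "w ! (a - 1) = sV ! r" using rk_inj[OF finV inV sVr] e1 rkr by simp
        then have "a \<in> G (sV ! r)" using aA unfolding G_def by simp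
        moreover have "rk A a = j" using rk_nth[OF finA i(1)] i(2) unfolding sA_def a_def by simp
        ultimately show "j \<in> rk A ` G (sV ! r)" by blast
      qed
    qed
    then show ?thesis using cr r lsV by simp
  qed
  have "map (\<lambda>i. rk A ` G i) sV = compw u"
    by (rule nth_equalityI) (use len1 len2 elt in simp_all)
  then have "restr (compw w) A = compw u" using LHS by simp
  then show ?thesis by (simp only: u_def V_def)
qed



theorem corollary4p7:
  fixes t :: ltree and A :: "nat set"
  assumes "left_increasing t"
    and "A \<subseteq> {1..nbranch t}"
  shows "left_increasing (tau (restr (sigma t) A))"
proof -
  obtain T0 where T0: "wf_pt T0" "inc T0 = t" and inct: "is_increasing t"
    using assms(1) unfolding left_increasing_def by blast
  define w where "w = bw t"
  have avw: "av w" using av_inc[OF T0(1)] T0(2) by (simp add: w_def)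
  obtain k where k: "levels t = {1..k}" and wft: "wf_pt (shape t)"
    using inct unfolding is_increasing_def by blast
  have sw: "set w = {1..k}" using levels_set_bw[OF wft] k by (simp add: w_def)
  have Aw: "A \<subseteq> {1..length w}" using assms(2) by (simp add: nbranch_def w_def)
  define V where "V = set (sub w A)"
  define u where "u = map (rk V) (sub w A)"
  have finV: "finite V" by (simp add: V_def)
  have avu: "av u"
  proof -
    have "av (sub w A)" using av_sub[OF avw Aw] .
    moreover have "av (map (rk V) (sub w A)) = av (sub w A)"
      by (rule av_map_mono) (use finV rk_mono in \<open>auto simp: V_def\<close>)
    ultimately show ?thesis by (simp add: u_def)
  qed
  have su: "set u = {1..card V}" unfolding u_def using rk_image[OF finV] by (simp add: V_def)
  have "\<exists>T. wf_pt T \<and> nv T = card V \<and> bw (shift 0 (inc T)) = u"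
    using construct[of "length u", THEN spec[of _ u], THEN spec[of _ 0], THEN spec[of _ "card V"]] avu su by simp
  then obtain T where T: "wf_pt T" "bw (inc T) = u" by auto
  define t' where "t' = inc T"
  have inc': "is_increasing t'" using inc_is_increasing[OF T(1)] by (simp add: t'_def)
  have li': "left_increasing t'" using inc' T(1) by (auto simp: left_increasing_def t'_def)
  have sig': "sigma t' = restr (sigma t) A"
  proof -
    have "sigma t' = compw u" using sigma_comp[OF inc'] T(2) by (simp add: t'_def)
    also have "\<dots> = restr (compw w) A" using restr_comp[OF sw Aw] by (simp add: u_def V_def)
    also have "\<dots> = restr (sigma t) A" using sigma_comp[OF inct] by (simp add: w_def)
    finally show ?thesis .
  qed
  have "tau (restr (sigma t) A) = t'"
    unfolding tau_def
  proof (rule the_equality)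
    show "is_increasing t' \<and> sigma t' = restr (sigma t) A" using inc' sig' by simp
    fix s assume s: "is_increasing s \<and> sigma s = restr (sigma t) A"
    obtain ks where ks: "levels s = {1..ks}" and wfs: "wf_pt (shape s)" "incr s"
      using s unfolding is_increasing_def by blast
    obtain kt where kt: "levels t' = {1..kt}" and wft': "wf_pt (shape t')" "incr t'"
      using inc' unfolding is_increasing_def by blast
    have "compw (bw s) = compw (bw t')"
      using sigma_comp[of s] sigma_comp[OF inc'] s sig' by simp
    moreover have "set (bw s) = {1..ks}" using levels_set_bw[OF wfs(1)] ks by simp
    moreover have "set (bw t') = {1..kt}" using levels_set_bw[OF wft'(1)] kt by simp
    ultimately have "bw s = bw t'" using comp_inj by blast
    then show "s = t'" using bw_inj wfs wft' by (simp add: good_def)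
  qed
  then show ?thesis using li' by simp
qed

end
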